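(* Let $S=\{(x_i,y_i)\}_{i=1}^n$ be a training set, $\{f_\theta\}$ a parameterized family of classifiers, and $\hat\theta\in\arg\min_\theta L_{\textrm{close-}1}(\{\ell(y_i,f_\theta(x_i))\}_{i=1}^n)$. Then $$\min_\theta L_{0-1}(\{(y_i,f_\theta(x_i))\}_{i=1}^n)=L_{0-1}(\hat\theta),$$ where $L_{0-1}(\theta)$ denotes the number of training examples misclassified by $f_\theta$.
   Context: Binary classification with labels $y\in\{-1,+1\}$ and real-valued predictions. An individual loss $\ell(y,f(x))\ge 0$ comes with a threshold $T$ such that an example is correctly classified iff its individual loss is below $T$. Given individual losses $\ell_1,\dots,\ell_n$, let $\ell_{[i]}$ be the individual loss with the $i$-th smallest value of $|\ell_j-T|$. For a constant $M$ at least as large as every individual loss that occurs, the close-$k$ aggregate loss is $L_{\textrm{close-}k}(\{\ell_i\})=\sum_{i=1}^n c_i$ with $c_i=\ell_{[i]}$ if $i\le k$, $c_i=0$ if $i>k$ and $\ell_{[i]}$ is correctly classified, and $c_i=M$ if $i>k$ and $\ell_{[i]}$ is incorrectly classified; here $k=1$. *)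

theory Defs
  imports Complex_Main
begin

definition close_order :: "real \<Rightarrow> real list \<Rightarrow> real list" where
  "close_order T ls = sort_key (\<lambda>l. \<bar>l - T\<bar>) ls"

(* close-k aggregate loss: the k losses closest to T contribute themselves;
   each remaining loss contributes 0 if correctly classified (l < T), else M. *)
definition close_k_loss :: "nat \<Rightarrow> real \<Rightarrow> real \<Rightarrow> real list \<Rightarrow> real" where
  "close_k_loss k T M ls =
     (let s = close_order T ls in
        sum_list (take k s) + sum_list (map (\<lambda>l. if l < T then 0 else M) (drop k s)))"

definition correctly_classified :: "real \<Rightarrow> real \<Rightarrow> bool" where
  "correctly_classified y z \<longleftrightarrow> y * z > 0"

definition zero_one_loss :: "('x \<times> real) list \<Rightarrow> ('x \<Rightarrow> real) \<Rightarrow> nat" where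
  "zero_one_loss S f = length (filter (\<lambda>(x, y). \<not> correctly_classified y (f x)) S)"

definition losses :: "(real \<Rightarrow> real \<Rightarrow> real) \<Rightarrow> ('x \<times> real) list \<Rightarrow> ('x \<Rightarrow> real) \<Rightarrow> real list" where
  "losses loss S f = map (\<lambda>(x, y). loss y (f x)) S"

end

theory Submission
  imports Defs "HOL-Library.Multiset"
begin

lemma closeA:
  assumes "ls \<noteq> []"
  shows "\<exists>h\<in>set ls. close_k_loss 1 T M ls
     = h - (if h < T then 0 else M) + sum_list (map (\<lambda>l. if l < T then 0 else M) ls)"
proof -
  define s where "s = close_order T ls"
  have ms: "mset s = mset ls" unfolding s_def close_order_def by (simp add: mset_sort)
  hence st: "set s = set ls" by (metis set_mset_mset)
  have sne: "s \<noteq> []" using assms ms by auto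
  then obtain h t where ht: "s = h # t" by (cases s) auto
  have sm: "sum_list (map (\<lambda>l. if l < T then 0 else M) s) = sum_list (map (\<lambda>l. if l < T then 0 else M) ls)"
    by (metis ms mset_map sum_mset_sum_list)
  have "close_k_loss 1 T M ls = h + sum_list (map (\<lambda>l. if l < T then 0 else M) t)"
    unfolding close_k_loss_def s_def[symmetric] Let_def ht by simp
  also have "\<dots> = h - (if h < T then 0 else M) + sum_list (map (\<lambda>l. if l < T then 0 else M) s)"
    using ht by simp
  finally have "close_k_loss 1 T M ls = h - (if h < T then 0 else M) + sum_list (map (\<lambda>l. if l < T then 0 else M) ls)"
    using sm by simp
  moreover have "h \<in> set ls" using st ht by auto
  ultimately show ?thesis by blast
qed

lemma sumg: "sum_list (map (\<lambda>l. if l < T then 0 else M) ls) = M * real (length (filter (\<lambda>l. \<not> l < T) ls))"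
  by (induction ls) (auto simp: algebra_simps)

theorem lemma4:
  fixes S :: "('x \<times> real) list"
    and f :: "'p \<Rightarrow> 'x \<Rightarrow> real"
    and loss :: "real \<Rightarrow> real \<Rightarrow> real"
    and T M :: real
    and \<theta>h :: 'p
  assumes labels: "\<forall>(x, y) \<in> set S. y \<in> {-1, 1}"
    and nonneg: "\<forall>y z. loss y z \<ge> 0"
    and threshold: "\<forall>y \<in> {-1, 1}. \<forall>z. loss y z < T \<longleftrightarrow> correctly_classified y z"
    and M_bound: "\<forall>\<theta>. \<forall>(x, y) \<in> set S. loss y (f \<theta> x) \<le> M"
    and argmin: "\<forall>\<theta>. close_k_loss 1 T M (losses loss S (f \<theta>h))
                      \<le> close_k_loss 1 T M (losses loss S (f \<theta>))"
  shows "(INF \<theta>. zero_one_loss S (f \<theta>)) = zero_one_loss S (f \<theta>h)"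
proof -
  have cnt: "length (filter (\<lambda>l. \<not> l < T) (losses loss S (f \<theta>))) = zero_one_loss S (f \<theta>)" for \<theta>
  proof -
    have "length (filter (\<lambda>l. \<not> l < T) (losses loss S (f \<theta>)))
        = length (filter ((\<lambda>l. \<not> l < T) \<circ> (\<lambda>(x, y). loss y (f \<theta> x))) S)"
      unfolding losses_def by (simp add: filter_map)
    also have "\<dots> = zero_one_loss S (f \<theta>)"
      unfolding zero_one_loss_def
      by (rule arg_cong[where f=length], rule filter_cong) (use labels threshold in auto)
    finally show ?thesis .
  qed
  have le: "zero_one_loss S (f \<theta>h) \<le> zero_one_loss S (f \<theta>')" for \<theta>'
  proof (rule ccontr)
    assume "\<not> ?thesis"
    hence lt: "zero_one_loss S (f \<theta>') < zero_one_loss S (f \<theta>h)" by simp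
    define m where "m = zero_one_loss S (f \<theta>h)"
    define m' where "m' = zero_one_loss S (f \<theta>')"
    have mlen: "m \<le> length S" unfolding m_def zero_one_loss_def by simp
    have "S \<noteq> []" using lt unfolding zero_one_loss_def by auto
    hence ne: "losses loss S (f \<theta>) \<noteq> []" for \<theta> unfolding losses_def by simp
    have inset: "0 \<le> l \<and> l \<le> M" if "l \<in> set (losses loss S (f \<theta>))" for l \<theta>
      using that nonneg M_bound unfolding losses_def by auto
    \<comment> \<open>T > 0: theta' has a correctly classified example\<close>
    have "filter (\<lambda>l. \<not> l < T) (losses loss S (f \<theta>')) \<noteq> losses loss S (f \<theta>')"
    proof
      assume "filter (\<lambda>l. \<not> l < T) (losses loss S (f \<theta>')) = losses loss S (f \<theta>')"
      hence "m' = length S" using cnt[of \<theta>'] unfolding m'_def losses_def by simp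
      thus False using lt mlen unfolding m_def m'_def by simp
    qed
    then obtain l0 where l0: "l0 \<in> set (losses loss S (f \<theta>'))" "l0 < T"
      by (metis filter_True)
    have Tpos: "T > 0" using inset[OF l0(1)] l0(2) by linarith
    have "filter (\<lambda>l. \<not> l < T) (losses loss S (f \<theta>h)) \<noteq> []"
      using cnt[of \<theta>h] lt by auto
    then obtain l1 where l1: "l1 \<in> set (losses loss S (f \<theta>h))" "\<not> l1 < T"
      by (metis filter_False)
    have MT: "M \<ge> T" using inset[OF l1(1)] l1(2) by linarith
    have mm: "real m' + 1 \<le> real m" using lt unfolding m_def m'_def by simp
    have key: "M * real m' + M \<le> M * real m"
      using mult_left_mono[OF mm, of M] MT Tpos by (simp add: algebra_simps)
    obtain h where h: "h \<in> set (losses loss S (f \<theta>h))"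
      "close_k_loss 1 T M (losses loss S (f \<theta>h)) = h - (if h < T then 0 else M) + M * real m"
      using closeA[OF ne[of \<theta>h], of T M] unfolding sumg cnt m_def by blast
    obtain h' where h': "h' \<in> set (losses loss S (f \<theta>'))"
      "close_k_loss 1 T M (losses loss S (f \<theta>')) = h' - (if h' < T then 0 else M) + M * real m'"
      using closeA[OF ne[of \<theta>'], of T M] unfolding sumg cnt m'_def by blast
    have "close_k_loss 1 T M (losses loss S (f \<theta>h)) \<le> close_k_loss 1 T M (losses loss S (f \<theta>'))"
      using argmin by blast
    thus False using h h' inset[OF h(1)] inset[OF h'(1)] key Tpos MT
      by (auto split: if_splits)
  qed
  show ?thesis
    by (rule antisym) (auto intro: cINF_lower cINF_greatest le)
qed

end
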